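(* Let $W(x_1,\dots,x_n)$ be an invertible, non-degenerate, quasi-homogeneous polynomial with $2\sum_jw_j=d$, let $J_W^2\in G\subseteq\operatorname{SL}_W$, $V=x_0^2+W$, $J_V=\sigma J_W$, and $\mathcal H=\mathcal H_{G[\sigma,J_W]}(V)^{G[J_V]}$. For $L\in\{G,\sigma G,J_WG,J_VG\}$ set $[\mathcal H]_L=\bigoplus_{g\in L}\operatorname{Jac}(V_g)^{G[J_V]}$. Then $\mathcal H=[\mathcal H]_G\oplus[\mathcal H]_{\sigma G}\oplus[\mathcal H]_{J_WG}\oplus[\mathcal H]_{J_VG}$, where $[\mathcal H]_G\oplus[\mathcal H]_{J_VG}$ is $\mathbb Z\times\mathbb Z$-graded and $[\mathcal H]_{\sigma G}\oplus[\mathcal H]_{J_WG}$ is $(\tfrac12+\mathbb Z)\times(\tfrac12+\mathbb Z)$-graded.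
   Context: $W=\sum_i\prod_jx_j^{m_{i,j}}$ with invertible exponent matrix, weights $w_j$, degree $d$, non-degenerate. $\operatorname{Aut}_W$: diagonal symmetries; $\operatorname{SL}_W=\operatorname{Aut}_W\cap\operatorname{SL}(n;\mathbb C)$; $J_W=(e^{2\pi iw_j/d})_j$, regarded as a symmetry of $V$ fixing $x_0$ (as is $G$); $\sigma=(-1,1,\dots,1)$ on $(x_0,\dots,x_n)$; $V$ has weights $(d/2,w_1,\dots,w_n)$ and degree $d$, and $J_V=\sigma J_W$ is its grading element. $L[h]$ is the group generated by $L$ and $h$. For $g$ a diagonal symmetry of $V$, $F_g$ is the set of indices of $g$-fixed coordinates, $V_g$ the restriction, $\operatorname{Jac}(V_g)=\mathbb C[x_j:j\in F_g]/(\partial_jV_g)\cdot\bigwedge_{j\in F_g}dx_j$; $\mathcal H_S(V)^K=\bigoplus_{g\in S}\operatorname{Jac}(V_g)^K$, where $h=\frac1D(p_0,\dots,p_n)$ acts on $\prod x_j^{a_j}\bigwedge dx_j$ by $e^{2\pi i\sum_{j\in F_g}(a_j+1)p_j/D}$. Bi-degree of that form: $(\#F_g-\deg+\operatorname{a}(g),\deg+\operatorname{a}(g))$, $\deg=\sum_{j\in F_g}(a_j+1)w_j/d$ (with $w_0=d/2$), $\operatorname{a}(g)=\sum_jp_j/D$, $0\le p_j<D$. *)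

theory Defs
  imports "HOL-Analysis.Analysis"
begin

text \<open>Coordinates x_0, x_1, ..., x_n are indexed by naturals; W lives on x_1..x_n.
  A diagonal transformation of C^(n+1) is a function g :: nat => complex with nonzero
  entries and g j = 1 for j > n (canonical representative).\<close>

definition diag :: "nat \<Rightarrow> (nat \<Rightarrow> complex) set" where
  "diag n = {g. (\<forall>j. g j \<noteq> 0) \<and> (\<forall>j>n. g j = 1)}"

definition dmul :: "(nat \<Rightarrow> complex) \<Rightarrow> (nat \<Rightarrow> complex) \<Rightarrow> nat \<Rightarrow> complex" where
  "dmul g h = (\<lambda>j. g j * h j)"

definition dinv :: "(nat \<Rightarrow> complex) \<Rightarrow> nat \<Rightarrow> complex" where
  "dinv g = (\<lambda>j. inverse (g j))"

definition did :: "nat \<Rightarrow> complex" where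
  "did = (\<lambda>j. 1)"

definition dsubgroup :: "nat \<Rightarrow> (nat \<Rightarrow> complex) set \<Rightarrow> bool" where
  "dsubgroup n H \<longleftrightarrow> H \<subseteq> diag n \<and> did \<in> H \<and>
     (\<forall>g\<in>H. \<forall>h\<in>H. dmul g h \<in> H) \<and> (\<forall>g\<in>H. dinv g \<in> H)"

text \<open>Group generated by a set S of diagonal transformations (e.g. L[h] = dgen n (L \<union> {h})).\<close>
definition dgen :: "nat \<Rightarrow> (nat \<Rightarrow> complex) set \<Rightarrow> (nat \<Rightarrow> complex) set" where
  "dgen n S = \<Inter> {H. dsubgroup n H \<and> S \<subseteq> H}"

definition Wpoly :: "nat \<Rightarrow> (nat \<Rightarrow> nat \<Rightarrow> nat) \<Rightarrow> (nat \<Rightarrow> complex) \<Rightarrow> complex" where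
  "Wpoly n M x = (\<Sum>i=1..n. \<Prod>j=1..n. x j ^ M i j)"

definition dWpoly :: "nat \<Rightarrow> (nat \<Rightarrow> nat \<Rightarrow> nat) \<Rightarrow> nat \<Rightarrow> (nat \<Rightarrow> complex) \<Rightarrow> complex" where
  "dWpoly n M k x = (\<Sum>i=1..n. of_nat (M i k) * x k ^ (M i k - 1) *
                         (\<Prod>j\<in>{1..n}-{k}. x j ^ M i j))"

definition exp_det :: "nat \<Rightarrow> (nat \<Rightarrow> nat \<Rightarrow> nat) \<Rightarrow> int" where
  "exp_det n M = (\<Sum>p | p permutes {1..n}. sign p * (\<Prod>i=1..n. int (M i (p i))))"

definition invertible_qh :: "nat \<Rightarrow> (nat \<Rightarrow> nat \<Rightarrow> nat) \<Rightarrow> (nat \<Rightarrow> nat) \<Rightarrow> nat \<Rightarrow> bool" where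
  "invertible_qh n M w d \<longleftrightarrow> n \<ge> 1 \<and> d > 0 \<and> (\<forall>j\<in>{1..n}. w j > 0) \<and>
     exp_det n M \<noteq> 0 \<and> (\<forall>i\<in>{1..n}. (\<Sum>j=1..n. M i j * w j) = d)"

definition nondegenerate :: "nat \<Rightarrow> (nat \<Rightarrow> nat \<Rightarrow> nat) \<Rightarrow> bool" where
  "nondegenerate n M \<longleftrightarrow>
     (\<forall>x::nat \<Rightarrow> complex. (\<forall>k\<in>{1..n}. dWpoly n M k x = 0) \<longrightarrow> (\<forall>j\<in>{1..n}. x j = 0))"

text \<open>Diagonal symmetries of W, regarded as symmetries of V fixing x_0.\<close>
definition AutW :: "nat \<Rightarrow> (nat \<Rightarrow> nat \<Rightarrow> nat) \<Rightarrow> (nat \<Rightarrow> complex) set" where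
  "AutW n M = {g \<in> diag n. g 0 = 1 \<and> (\<forall>x. Wpoly n M (\<lambda>j. g j * x j) = Wpoly n M x)}"

definition SLW :: "nat \<Rightarrow> (nat \<Rightarrow> nat \<Rightarrow> nat) \<Rightarrow> (nat \<Rightarrow> complex) set" where
  "SLW n M = {g \<in> AutW n M. (\<Prod>j=1..n. g j) = 1}"

definition JW :: "nat \<Rightarrow> (nat \<Rightarrow> nat) \<Rightarrow> nat \<Rightarrow> nat \<Rightarrow> complex" where
  "JW n w d = (\<lambda>j. if 1 \<le> j \<and> j \<le> n then exp (2 * pi * \<i> * of_nat (w j) / of_nat d) else 1)"

definition sigma :: "nat \<Rightarrow> complex" where
  "sigma = (\<lambda>j. if j = 0 then -1 else 1)"

definition JV :: "nat \<Rightarrow> (nat \<Rightarrow> nat) \<Rightarrow> nat \<Rightarrow> nat \<Rightarrow> complex" where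
  "JV n w d = dmul sigma (JW n w d)"

definition Fix :: "nat \<Rightarrow> (nat \<Rightarrow> complex) \<Rightarrow> nat set" where
  "Fix n g = {j \<in> {0..n}. g j = 1}"

definition phase :: "complex \<Rightarrow> real" where
  "phase z = frac (Arg z / (2 * pi))"

definition age :: "nat \<Rightarrow> (nat \<Rightarrow> complex) \<Rightarrow> real" where
  "age n g = (\<Sum>j=0..n. phase (g j))"

definition wV :: "(nat \<Rightarrow> nat) \<Rightarrow> nat \<Rightarrow> nat \<Rightarrow> real" where
  "wV w d j = (if j = 0 then real d / 2 else real (w j))"

text \<open>The form prod_{j in F_g} x_j^(a_j) /\ dx_j in the g-sector, with exponents a.\<close>
definition fdeg :: "nat \<Rightarrow> (nat \<Rightarrow> nat) \<Rightarrow> nat \<Rightarrow> (nat \<Rightarrow> complex) \<Rightarrow> (nat \<Rightarrow> nat) \<Rightarrow> real" where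
  "fdeg n w d g a = (\<Sum>j\<in>Fix n g. real (a j + 1) * wV w d j / real d)"

definition bideg :: "nat \<Rightarrow> (nat \<Rightarrow> nat) \<Rightarrow> nat \<Rightarrow> (nat \<Rightarrow> complex) \<Rightarrow> (nat \<Rightarrow> nat) \<Rightarrow> real \<times> real" where
  "bideg n w d g a = (real (card (Fix n g)) - fdeg n w d g a + age n g,
                      fdeg n w d g a + age n g)"

text \<open>h acts on the form by prod_{j in F_g} h_j^(a_j+1) = exp(2 pi i sum (a_j+1) p_j/D).\<close>
definition form_invariant :: "nat \<Rightarrow> (nat \<Rightarrow> complex) set \<Rightarrow> (nat \<Rightarrow> complex) \<Rightarrow> (nat \<Rightarrow> nat) \<Rightarrow> bool" where
  "form_invariant n K g a \<longleftrightarrow> (\<forall>h\<in>K. (\<Prod>j\<in>Fix n g. h j ^ (a j + 1)) = 1)"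

definition half_int :: "real set" where
  "half_int = {x. x - 1/2 \<in> \<int>}"

end

theory Submission
  imports Defs
begin
definition ee :: "real \<Rightarrow> complex" where "ee x = exp (2 * pi * \<i> * complex_of_real x)"

lemma ee_add: "ee (x + y) = ee x * ee y"
  unfolding ee_def by (simp add: distrib_left exp_add)

lemma ee_int_eq: "ee (of_int k) = 1"
proof -
  have "2 * pi * \<i> * complex_of_real (of_int k) = \<i> * (complex_of_int k * (complex_of_real pi * 2))"
    by simp
  then show ?thesis unfolding ee_def using exp_2pi_1_int by metis
qed

lemma ee_int: "ee x = 1 \<Longrightarrow> x \<in> \<int>"
proof -
  assume "ee x = 1"
  then obtain n where "Im (2 * pi * \<i> * complex_of_real x) = real_of_int (2 * n) * pi"
    unfolding ee_def exp_eq_1 by blast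
  then have "2 * pi * x = 2 * real_of_int n * pi" by simp
  then have "x = of_int n" by simp
  then show ?thesis by simp
qed

lemma ee_0: "ee 0 = 1" unfolding ee_def by simp

lemma ee_sum: "ee (\<Sum>j\<in>A. f j) = (\<Prod>j\<in>A. ee (f j))"
  by (induction A rule: infinite_finite_induct) (simp_all add: ee_add ee_0)

lemma ee_frac: "ee (frac x) = ee x"
proof -
  have "x = frac x + of_int \<lfloor>x\<rfloor>" by (simp add: frac_def)
  then have "ee x = ee (frac x) * ee (of_int \<lfloor>x\<rfloor>)" by (metis ee_add)
  then show ?thesis by (simp add: ee_int_eq)
qed

lemma ee_phase: "z \<noteq> 0 \<Longrightarrow> z = complex_of_real (norm z) * ee (phase z)"
proof -
  assume z: "z \<noteq> 0"
  have "ee (phase z) = ee (Arg z / (2*pi))" unfolding phase_def by (rule ee_frac)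
  also have "\<dots> = exp (\<i> * complex_of_real (Arg z))" unfolding ee_def
    by (simp add: field_simps)
  finally show ?thesis using Arg_eq[OF z] by simp
qed

lemma norm_ee: "norm (ee x) = 1"
  unfolding ee_def by (metis mult.commute mult.left_commute norm_exp_i_times of_real_mult of_real_numeral)

lemma ee_pow: "ee x ^ k = ee (real k * x)"
  unfolding ee_def by (metis exp_of_nat_mult mult.commute mult.left_commute of_real_mult of_real_of_nat_eq)

lemma age_ee:
  assumes nz: "\<forall>j. g j \<noteq> 0" and c: "(\<Prod>j=0..n. g j) = c" and nc: "norm c = 1"
  shows "ee (age n g) = c"
proof -
  have "(\<Prod>j=0..n. g j) = (\<Prod>j=0..n. complex_of_real (norm (g j)) * ee (phase (g j)))"
    using ee_phase nz by (metis (no_types, lifting) prod.cong)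
  also have "\<dots> = complex_of_real (\<Prod>j=0..n. norm (g j)) * ee (age n g)"
    unfolding age_def ee_sum prod.distrib by simp
  finally have eq: "c = complex_of_real (\<Prod>j=0..n. norm (g j)) * ee (age n g)" using c by simp
  then have "norm c = (\<Prod>j=0..n. norm (g j))"
    by (simp del: of_real_prod add: norm_mult norm_ee prod_nonneg)
  with nc have "(\<Prod>j=0..n. norm (g j)) = 1" by simp
  with eq show ?thesis by (simp del: of_real_prod)
qed

lemma ee_half: "ee (1/2) = -1"
  unfolding ee_def by simp

lemma dmul_assoc: "dmul (dmul a b) c = dmul a (dmul b c)"
  by (simp add: dmul_def fun_eq_iff mult.assoc)
lemma dmul_comm: "dmul a b = dmul b a"
  by (simp add: dmul_def fun_eq_iff mult.commute)
lemma dmul_did[simp]: "dmul did a = a" "dmul a did = a"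
  by (simp_all add: dmul_def did_def)
lemma dmul_diag: "a \<in> diag n \<Longrightarrow> b \<in> diag n \<Longrightarrow> dmul a b \<in> diag n"
  by (simp add: dmul_def diag_def)
lemma dinv_dmul: "dinv (dmul a b) = dmul (dinv a) (dinv b)"
  by (simp add: dmul_def dinv_def fun_eq_iff)
lemma dinv_diag: "a \<in> diag n \<Longrightarrow> dinv a \<in> diag n"
  by (simp add: dinv_def diag_def)
lemma sigma_diag: "sigma \<in> diag n"
  by (simp add: sigma_def diag_def)
lemma ss: "dmul sigma sigma = did"
  by (simp add: dmul_def sigma_def did_def fun_eq_iff)
lemma dinv_sigma: "dinv sigma = sigma"
  by (simp add: dinv_def sigma_def fun_eq_iff)
lemma dinv_did: "dinv did = did"
  by (simp add: dinv_def did_def fun_eq_iff)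

lemma prod0: "(\<Prod>j=0..(n::nat). f j) = f 0 * (\<Prod>j=1..n. f j)"
  using prod.atLeast_Suc_atMost[of 0 n f] by simp

lemma dmul_prod: "(\<Prod>j=0..n. dmul a b j) = (\<Prod>j=0..n. a j) * (\<Prod>j=0..n. b j)"
  by (simp add: dmul_def prod.distrib)

lemma dgen_in: "x \<in> S \<Longrightarrow> x \<in> dgen n S"
  unfolding dgen_def by blast

lemma dgen_least: "dsubgroup n H \<Longrightarrow> S \<subseteq> H \<Longrightarrow> dgen n S \<subseteq> H"
  unfolding dgen_def by blast

lemma dgen_sub: "x \<in> dgen n S \<Longrightarrow> dsubgroup n H \<Longrightarrow> S \<subseteq> H \<Longrightarrow> x \<in> H"
  unfolding dgen_def by blast

lemma JW_diag: "JW n w d \<in> diag n"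
  by (simp add: JW_def diag_def)

theorem lemma5p7:
  fixes n d :: nat and M :: "nat \<Rightarrow> nat \<Rightarrow> nat" and w :: "nat \<Rightarrow> nat"
    and G :: "(nat \<Rightarrow> complex) set"
  assumes W: "invertible_qh n M w d" and nd: "nondegenerate n M"
    and wsum: "2 * (\<Sum>j=1..n. w j) = d"
    and Gsub: "dsubgroup n G" and GSL: "G \<subseteq> SLW n M"
    and JW2: "dmul (JW n w d) (JW n w d) \<in> G"
  shows
    "dgen n (G \<union> {sigma, JW n w d}) =
       G \<union> dmul sigma ` G \<union> dmul (JW n w d) ` G \<union> dmul (JV n w d) ` G
     \<and> G \<inter> dmul sigma ` G = {} \<and> G \<inter> dmul (JW n w d) ` G = {}
     \<and> G \<inter> dmul (JV n w d) ` G = {} \<and> dmul sigma ` G \<inter> dmul (JW n w d) ` G = {}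
     \<and> dmul sigma ` G \<inter> dmul (JV n w d) ` G = {}
     \<and> dmul (JW n w d) ` G \<inter> dmul (JV n w d) ` G = {}
     \<and> (\<forall>g \<in> G \<union> dmul (JV n w d) ` G. \<forall>a.
          form_invariant n (dgen n (G \<union> {JV n w d})) g a \<longrightarrow>
          fst (bideg n w d g a) \<in> \<int> \<and> snd (bideg n w d g a) \<in> \<int>)
     \<and> (\<forall>g \<in> dmul sigma ` G \<union> dmul (JW n w d) ` G. \<forall>a.
          form_invariant n (dgen n (G \<union> {JV n w d})) g a \<longrightarrow>
          fst (bideg n w d g a) \<in> half_int \<and> snd (bideg n w d g a) \<in> half_int)"
proof -
  define J where "J = JW n w d"
  define s where "s = sigma"
  define V where "V = JV n w d"
  have V: "V = dmul s J" unfolding V_def s_def J_def JV_def ..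
  have dpos: "d > 0" using W unfolding invertible_qh_def by simp
  have Gd: "G \<subseteq> diag n" and Gid: "did \<in> G" and Gm: "\<And>g h. g \<in> G \<Longrightarrow> h \<in> G \<Longrightarrow> dmul g h \<in> G"
    and Gi: "\<And>g. g \<in> G \<Longrightarrow> dinv g \<in> G"
    using Gsub unfolding dsubgroup_def by auto
  have G0: "g 0 = 1" and Gp: "(\<Prod>j=0..n. g j) = 1" if "g \<in> G" for g
    using GSL that unfolding SLW_def AutW_def by (auto simp: prod0)
  have S2: "dmul J J \<in> G" using JW2 J_def by simp
  have Jd: "J \<in> diag n" unfolding J_def by (rule JW_diag)
  have sd: "s \<in> diag n" unfolding s_def by (rule sigma_diag)
  have Vd: "V \<in> diag n" using V Jd sd dmul_diag by simp
  have Jj: "J j = ee (real (w j) / real d)" if "1 \<le> j" "j \<le> n" for j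
    using that unfolding J_def JW_def ee_def by (simp add: mult.assoc)
  have s0: "s 0 = -1" and J0: "J 0 = 1" and V0: "V 0 = -1"
    unfolding s_def J_def V sigma_def JW_def by (simp_all add: dmul_def JW_def sigma_def)
  have sp: "(\<Prod>j=0..n. s j) = -1" unfolding s_def by (simp add: prod0 sigma_def)
  have Jp: "(\<Prod>j=0..n. J j) = -1"
  proof -
    have "(\<Prod>j=0..n. J j) = (\<Prod>j=1..n. ee (real (w j) / real d))"
      using Jj J0 by (simp add: prod0)
    also have "\<dots> = ee (\<Sum>j=1..n. real (w j) / real d)" by (simp add: ee_sum)
    also have "(\<Sum>j=1..n. real (w j) / real d) = 1/2"
    proof -
      have "real d = 2 * (\<Sum>j=1..n. real (w j))" using wsum
        by (metis of_nat_mult of_nat_numeral of_nat_sum)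
      then show ?thesis using dpos by (simp add: sum_divide_distrib[symmetric])
    qed
    finally show ?thesis by (simp add: ee_half)
  qed
  have Vp: "(\<Prod>j=0..n. V j) = 1" using V sp Jp by (simp add: dmul_prod)
  define U where "U = G \<union> dmul s ` G \<union> dmul J ` G \<union> dmul V ` G"
  define C where "C = {did, s, J, V}"
  have U_iff: "x \<in> U \<longleftrightarrow> (\<exists>c\<in>C. \<exists>g\<in>G. x = dmul c g)" for x
    unfolding U_def C_def by auto
  have CC: "\<exists>c''\<in>C. \<exists>k\<in>G. dmul c c' = dmul c'' k" if "c \<in> C" "c' \<in> C" for c c'
  proof -
    have sJ: "dmul s J = V" "dmul J s = V" using V dmul_comm by auto
    have sV: "dmul s V = J" "dmul V s = J" using V ss dmul_comm dmul_assoc s_def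
      by (metis dmul_did(1))+
    have JV: "dmul J V = dmul s (dmul J J)" "dmul V J = dmul s (dmul J J)"
      using V dmul_comm dmul_assoc by metis+
    have VV: "dmul V V = dmul did (dmul J J)"
      using V dmul_comm dmul_assoc ss s_def by (metis dmul_did(1))
    have sss: "dmul s s = dmul did did" using ss s_def by simp
    show ?thesis using that unfolding C_def
      apply (elim insertE emptyE)
      using Gid S2 sJ sV JV VV sss
      by (auto simp: C_def) (metis dmul_did)+
  qed
  have Cd: "c \<in> diag n" if "c \<in> C" for c using that sd Jd Vd unfolding C_def
    by (auto simp: diag_def did_def)
  have Cinv: "\<exists>c'\<in>C. \<exists>k\<in>G. dinv c = dmul c' k" if "c \<in> C" for c
  proof -
    have Jinv: "dinv J = dmul J (dinv (dmul J J))"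
      using Jd by (auto simp: dinv_def dmul_def diag_def fun_eq_iff field_simps)
    have "dinv V = dmul (dinv s) (dinv J)" unfolding V dinv_dmul ..
    also have "\<dots> = dmul s (dmul J (dinv (dmul J J)))" using Jinv dinv_sigma s_def by simp
    also have "\<dots> = dmul V (dinv (dmul J J))" using V dmul_assoc by simp
    finally have "dinv V = dmul V (dinv (dmul J J))" .
    note VI = this
    have "did \<in> C" "s \<in> C" "J \<in> C" "V \<in> C" unfolding C_def by auto
    note CI = this
    have dS: "dinv (dmul J J) \<in> G" using Gi[OF S2] .
    from that have "c = did \<or> c = s \<or> c = J \<or> c = V" unfolding C_def by auto
    then show ?thesis
    proof (elim disjE)
      assume "c = did" then show ?thesis using CI Gid dinv_did by (metis dmul_did(1))
    next
      assume "c = s" then show ?thesis using CI Gid dinv_sigma s_def by (metis dmul_did(2))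
    next
      assume "c = J" then show ?thesis using CI dS Jinv by blast
    next
      assume "c = V" then show ?thesis using CI dS VI by blast
    qed
  qed
  have Usub: "dsubgroup n U"
    unfolding dsubgroup_def
  proof (intro conjI ballI)
    show "U \<subseteq> diag n"
    proof
      fix x assume "x \<in> U"
      then obtain c g where "c \<in> C" "g \<in> G" "x = dmul c g" using U_iff by blast
      then show "x \<in> diag n" using Cd Gd dmul_diag by blast
    qed
    show "did \<in> U" unfolding U_def using Gid by simp
    fix x y assume "x \<in> U" "y \<in> U"
    then obtain c g c' g' where c: "c \<in> C" "g \<in> G" "x = dmul c g" and c': "c' \<in> C" "g' \<in> G" "y = dmul c' g'"
      using U_iff by blast
    obtain c'' k where "c'' \<in> C" "k \<in> G" "dmul c c' = dmul c'' k" using CC c c' by blast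
    moreover have "dmul x y = dmul (dmul c c') (dmul g g')"
      using c c' by (simp add: dmul_def fun_eq_iff mult_ac)
    ultimately have "dmul x y = dmul c'' (dmul k (dmul g g'))" by (simp add: dmul_assoc)
    moreover have "dmul k (dmul g g') \<in> G" using Gm c c' \<open>k \<in> G\<close> by blast
    ultimately show "dmul x y \<in> U" unfolding U_iff using \<open>c'' \<in> C\<close> by blast
  next
    fix x assume "x \<in> U"
    then obtain c g where c: "c \<in> C" "g \<in> G" "x = dmul c g" using U_iff by blast
    obtain c'' k where "c'' \<in> C" "k \<in> G" "dinv c = dmul c'' k" using Cinv c by blast
    then have "dinv x = dmul c'' (dmul k (dinv g))" using c by (simp add: dinv_dmul dmul_assoc)
    moreover have "dmul k (dinv g) \<in> G" using Gm Gi c \<open>k \<in> G\<close> by blast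
    ultimately show "dinv x \<in> U" unfolding U_iff using \<open>c'' \<in> C\<close> by blast
  qed
  have gen: "dgen n (G \<union> {sigma, JW n w d}) = U"
  proof
    show "dgen n (G \<union> {sigma, JW n w d}) \<subseteq> U"
    proof (rule dgen_least[OF Usub])
      have "s \<in> U" "J \<in> U" unfolding U_iff C_def using Gid by (metis dmul_did(2) insertCI)+
      then show "G \<union> {sigma, JW n w d} \<subseteq> U" unfolding s_def J_def U_def by blast
    qed
    show "U \<subseteq> dgen n (G \<union> {sigma, JW n w d})"
    proof
      fix x assume "x \<in> U"
      then obtain c g where c: "c \<in> C" "g \<in> G" "x = dmul c g" using U_iff by blast
      show "x \<in> dgen n (G \<union> {sigma, JW n w d})" unfolding dgen_def
      proof
        fix H assume "H \<in> {H. dsubgroup n H \<and> G \<union> {sigma, JW n w d} \<subseteq> H}"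
        then have H: "dsubgroup n H" "G \<subseteq> H" "s \<in> H" "J \<in> H" by (auto simp: s_def J_def)
        then have Hm: "\<And>a b. a \<in> H \<Longrightarrow> b \<in> H \<Longrightarrow> dmul a b \<in> H" and "did \<in> H"
          unfolding dsubgroup_def by auto
        have "dmul s J \<in> H" using Hm H by blast
        then have "c \<in> H" using c(1) H \<open>did \<in> H\<close> V unfolding C_def by blast
        then show "x \<in> H" using c H Hm by auto
      qed
    qed
  qed
  have sig: "(dmul c g) 0 = c 0 \<and> (\<Prod>j=0..n. dmul c g j) = (\<Prod>j=0..n. c j)" if "g \<in> G" for c g
    using G0[OF that] Gp[OF that] by (simp add: dmul_prod) (simp add: dmul_def)
  have fdegZ: "fdeg n w d g a \<in> \<int>" if fi: "form_invariant n (dgen n (G \<union> {JV n w d})) g a" for g a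
  proof -
    have "V \<in> dgen n (G \<union> {JV n w d})" using V_def by (simp add: dgen_in)
    then have P: "(\<Prod>j\<in>Fix n g. V j ^ (a j + 1)) = 1" using fi unfolding form_invariant_def by blast
    have Vj: "V j = ee (wV w d j / real d)" if "j \<le> n" for j
    proof (cases "j = 0")
      case True then show ?thesis using V0 dpos by (simp add: wV_def ee_half)
    next
      case False
      then have "V j = J j" unfolding V by (simp add: dmul_def s_def sigma_def)
      then show ?thesis using Jj[of j] False that by (simp add: wV_def)
    qed
    have "(\<Prod>j\<in>Fix n g. V j ^ (a j + 1)) = (\<Prod>j\<in>Fix n g. ee (real (a j + 1) * wV w d j / real d))"
    proof (rule prod.cong)
      fix j assume "j \<in> Fix n g"
      then have "j \<le> n" unfolding Fix_def by simp
      then show "V j ^ (a j + 1) = ee (real (a j + 1) * wV w d j / real d)"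
        using Vj ee_pow by (metis times_divide_eq_right)
    qed simp
    also have "\<dots> = ee (fdeg n w d g a)" unfolding fdeg_def by (simp add: ee_sum)
    finally show ?thesis using P ee_int by simp
  qed
  have ageZ: "age n x \<in> \<int>" if "x \<in> diag n" "(\<Prod>j=0..n. x j) = 1" for x
    using age_ee[of x n 1] that ee_int unfolding diag_def by simp
  have ageH: "age n x - 1/2 \<in> \<int>" if "x \<in> diag n" "(\<Prod>j=0..n. x j) = -1" for x
  proof -
    have "ee (age n x) = -1" using age_ee[of x n "-1"] that unfolding diag_def by simp
    then have "ee (age n x - 1/2 + 1/2) = -1" by simp
    then have "ee (age n x - 1/2) = 1" unfolding ee_add ee_half by simp
    then show ?thesis by (rule ee_int)
  qed
  have Ud: "x \<in> diag n" if "c \<in> C" "g \<in> G" "x = dmul c g" for x c g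
    using that Cd Gd dmul_diag by blast
  have CI: "did \<in> C" "s \<in> C" "J \<in> C" "V \<in> C" unfolding C_def by auto
  have Gd': "g \<in> diag n" if "g \<in> G" for g using that Gd by blast
  have didp: "(\<Prod>j=0..n. did j) = 1" by (simp add: did_def)
  have int_case: "fst (bideg n w d g a) \<in> \<int> \<and> snd (bideg n w d g a) \<in> \<int>"
    if "g \<in> diag n" "(\<Prod>j=0..n. g j) = 1" "form_invariant n (dgen n (G \<union> {JV n w d})) g a" for g a
  proof -
    have "fdeg n w d g a \<in> \<int>" "age n g \<in> \<int>" using fdegZ ageZ that by auto
    then show ?thesis unfolding bideg_def by auto
  qed
  have half_case: "fst (bideg n w d g a) \<in> half_int \<and> snd (bideg n w d g a) \<in> half_int"
    if "g \<in> diag n" "(\<Prod>j=0..n. g j) = -1" "form_invariant n (dgen n (G \<union> {JV n w d})) g a" for g a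
  proof -
    have A: "fdeg n w d g a \<in> \<int>" "age n g - 1/2 \<in> \<int>" using fdegZ ageH that by auto
    define c where "c = real (card (Fix n g))"
    define f where "f = fdeg n w d g a"
    define e where "e = age n g"
    have B: "f \<in> \<int>" "e - 1/2 \<in> \<int>" "c \<in> \<int>" using A unfolding c_def f_def e_def by auto
    have "c - f + e - 1/2 = (c - f) + (e - 1/2)" "f + e - 1/2 = f + (e - 1/2)" by simp_all
    then have "c - f + e - 1/2 \<in> \<int>" "f + e - 1/2 \<in> \<int>" using B by (simp_all only: Ints_add Ints_diff)
    then show ?thesis unfolding bideg_def half_int_def c_def f_def e_def by simp
  qed
  have fG: "x 0 = 1 \<and> (\<Prod>j=0..n. x j) = 1 \<and> x \<in> diag n" if "x \<in> G" for x
    using that G0 Gp Gd' by blast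
  have fs: "x 0 = -1 \<and> (\<Prod>j=0..n. x j) = -1 \<and> x \<in> diag n" if xx: "x \<in> dmul s ` G" for x
  proof -
    obtain g where "g \<in> G" "x = dmul s g" using xx by blast
    then show ?thesis using sig[of g s] s0 sp Ud[OF CI(2)] by simp
  qed
  have fJ: "x 0 = 1 \<and> (\<Prod>j=0..n. x j) = -1 \<and> x \<in> diag n" if xx: "x \<in> dmul J ` G" for x
  proof -
    obtain g where "g \<in> G" "x = dmul J g" using xx by blast
    then show ?thesis using sig[of g J] J0 Jp Ud[OF CI(3)] by simp
  qed
  have fV: "x 0 = -1 \<and> (\<Prod>j=0..n. x j) = 1 \<and> x \<in> diag n" if xx: "x \<in> dmul V ` G" for x
  proof -
    obtain g where "g \<in> G" "x = dmul V g" using xx by blast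
    then show ?thesis using sig[of g V] V0 Vp Ud[OF CI(4)] by simp
  qed
  have ne: "(1::complex) \<noteq> -1" by simp
  have D1: "G \<inter> dmul s ` G = {}"
  proof -
    { fix x assume "x \<in> G" "x \<in> dmul s ` G"
      then have False using fG[of x] fs[of x] by simp }
    then show ?thesis by blast
  qed
  have D2: "G \<inter> dmul J ` G = {}"
  proof -
    { fix x assume "x \<in> G" "x \<in> dmul J ` G"
      then have False using fG[of x] fJ[of x] by simp }
    then show ?thesis by blast
  qed
  have D3: "G \<inter> dmul V ` G = {}"
  proof -
    { fix x assume "x \<in> G" "x \<in> dmul V ` G"
      then have False using fG[of x] fV[of x] by simp }
    then show ?thesis by blast
  qed
  have D4: "dmul s ` G \<inter> dmul J ` G = {}"
  proof -
    { fix x assume "x \<in> dmul s ` G" "x \<in> dmul J ` G"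
      then have False using fs[of x] fJ[of x] by simp }
    then show ?thesis by blast
  qed
  have D5: "dmul s ` G \<inter> dmul V ` G = {}"
  proof -
    { fix x assume "x \<in> dmul s ` G" "x \<in> dmul V ` G"
      then have False using fs[of x] fV[of x] by simp }
    then show ?thesis by blast
  qed
  have D6: "dmul J ` G \<inter> dmul V ` G = {}"
  proof -
    { fix x assume "x \<in> dmul J ` G" "x \<in> dmul V ` G"
      then have False using fJ[of x] fV[of x] by simp }
    then show ?thesis by blast
  qed
  have I1: "\<forall>g \<in> G \<union> dmul V ` G. \<forall>a. form_invariant n (dgen n (G \<union> {V})) g a \<longrightarrow>
          fst (bideg n w d g a) \<in> \<int> \<and> snd (bideg n w d g a) \<in> \<int>"
  proof (intro ballI allI impI)
    fix g a assume g: "g \<in> G \<union> dmul V ` G" and fi: "form_invariant n (dgen n (G \<union> {V})) g a"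
    have "g \<in> diag n \<and> (\<Prod>j=0..n. g j) = 1" using g fG fV by blast
    then show "fst (bideg n w d g a) \<in> \<int> \<and> snd (bideg n w d g a) \<in> \<int>"
      using int_case fi unfolding V_def by blast
  qed
  have I2: "\<forall>g \<in> dmul s ` G \<union> dmul J ` G. \<forall>a. form_invariant n (dgen n (G \<union> {V})) g a \<longrightarrow>
          fst (bideg n w d g a) \<in> half_int \<and> snd (bideg n w d g a) \<in> half_int"
  proof (intro ballI allI impI)
    fix g a assume g: "g \<in> dmul s ` G \<union> dmul J ` G" and fi: "form_invariant n (dgen n (G \<union> {V})) g a"
    have "g \<in> diag n \<and> (\<Prod>j=0..n. g j) = -1" using g fs fJ by blast
    then show "fst (bideg n w d g a) \<in> half_int \<and> snd (bideg n w d g a) \<in> half_int"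
      using half_case fi unfolding V_def by blast
  qed
  note facts = gen[unfolded U_def s_def J_def V_def] D1[unfolded s_def] D2[unfolded J_def]
    D3[unfolded V_def] D4[unfolded s_def J_def] D5[unfolded s_def V_def] D6[unfolded J_def V_def]
    I1[unfolded V_def] I2[unfolded s_def J_def V_def]
  show ?thesis
    apply (insert facts)
    apply (intro conjI)
    apply assumption+
    done
qed
end
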